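(* Let $u,v,w$ be words of length $N$ and let $f$ be an oriented TFPL with boundary $(u,v;w)$. Then $\mathrm{d}(w)-\mathrm{d}(u)-\mathrm{d}(v)=0$ if and only if $o_D(f)=e_U(f)=0$ and $f$ contains no two consecutive edges both oriented leftwards (i.e. no vertex whose incoming and outgoing edges both point in direction $(-1,0)$).
   Context: Let $N\ge 1$. $G^N$ is the induced subgraph of the square lattice $\mathbb{Z}^2$ formed by $N$ consecutive, horizontally centred rows having $3,5,\dots,2N+1$ vertices from top to bottom. It is bipartite; vertices of the same colour as the leftmost vertex of each row are called odd, the others even. Let $B_1,\dots,B_N$ be the even vertices of the bottom row, $L_1,\dots,L_N$ the leftmost vertices of the rows, and $R_1,\dots,R_N$ the rightmost vertices of the rows, each family numbered from left to right (so $L_1$ is the leftmost vertex of the bottom row and $R_1$ the rightmost vertex of the top row). A TFPL of size $N$ is a subgraph $f$ of $G^N$ (a set of edges) such that each $L_i$ and each $R_i$ has degree $0$ or $1$, each $B_i$ has degree $1$, every other vertex has degree $2$, and no path of $f$ joins two vertices $L_i,L_j$ or two vertices $R_i,R_j$. An oriented TFPL is a TFPL together with an orientation of each of its edges such that every vertex of degree $2$ has one incoming and one outgoing edge, the edges at the $L_i$ are oriented away from $L_i$, and the edges at the $R_i$ are oriented into $R_i$. For words $u,v,w\in\{0,1\}^N$, an oriented TFPL has boundary $(u,v;w)$ if for all $i$: $u_i=1$ iff $L_i$ has degree $1$; $v_i=0$ iff $R_i$ has degree $1$; $w_i=1$ if $B_i$ has in-degree $1$ and $w_i=0$ if $B_i$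 has out-degree $1$. $\mathrm{d}(u)$ is the number of pairs $i<j$ with $u_i=1,u_j=0$. $o_D(f)$ is the number of edges of $f$ oriented from an odd vertex to an even vertex and pointing downwards; $e_U(f)$ is the number of edges of $f$ oriented from an even vertex to an odd vertex and pointing upwards. *)

theory Defs
  imports Main
begin

(* Vertices of G^N: points (x,y) of Z^2; row at height y (y = 0 is the bottom row,
   y = N-1 the top row) consists of the points with |x| <= N - y, i.e. rows of
   3,5,...,2N+1 vertices from top to bottom, horizontally centred. *)
type_synonym vert = "int \<times> int"

definition tfpl_verts :: "nat \<Rightarrow> vert set" where
  "tfpl_verts N = {(x,y). 0 \<le> y \<and> y < int N \<and> \<bar>x\<bar> \<le> int N - y}"

definition tfpl_adj :: "nat \<Rightarrow> vert \<Rightarrow> vert \<Rightarrow> bool" where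
  "tfpl_adj N a b \<longleftrightarrow> a \<in> tfpl_verts N \<and> b \<in> tfpl_verts N \<and>
      \<bar>fst a - fst b\<bar> + \<bar>snd a - snd b\<bar> = 1"

(* odd = same colour as the leftmost vertex (-(N-y), y) of each row *)
definition odd_vert :: "nat \<Rightarrow> vert \<Rightarrow> bool" where
  "odd_vert N p \<longleftrightarrow> even (fst p + snd p + int N)"

definition even_vert :: "nat \<Rightarrow> vert \<Rightarrow> bool" where
  "even_vert N p \<longleftrightarrow> \<not> odd_vert N p"

definition Lv :: "nat \<Rightarrow> nat \<Rightarrow> vert" where
  "Lv N i = (- (int N - int i + 1), int i - 1)"

definition Rv :: "nat \<Rightarrow> nat \<Rightarrow> vert" where
  "Rv N i = (int i, int N - int i)"

definition Bv :: "nat \<Rightarrow> nat \<Rightarrow> vert" where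
  "Bv N i = (2 * int i - 1 - int N, 0)"

(* An oriented subgraph is a set F of directed edges (a,b), meaning a -> b. *)
definition indeg :: "(vert \<times> vert) set \<Rightarrow> vert \<Rightarrow> nat" where
  "indeg F v = card {a. (a, v) \<in> F}"

definition outdeg :: "(vert \<times> vert) set \<Rightarrow> vert \<Rightarrow> nat" where
  "outdeg F v = card {b. (v, b) \<in> F}"

definition deg :: "(vert \<times> vert) set \<Rightarrow> vert \<Rightarrow> nat" where
  "deg F v = indeg F v + outdeg F v"

definition joined :: "(vert \<times> vert) set \<Rightarrow> vert \<Rightarrow> vert \<Rightarrow> bool" where
  "joined F a b \<longleftrightarrow> (a, b) \<in> (F \<union> F\<inverse>)\<^sup>*"

definition oriented_TFPL :: "nat \<Rightarrow> (vert \<times> vert) set \<Rightarrow> bool" where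
  "oriented_TFPL N F \<longleftrightarrow>
     F \<subseteq> {(a, b). tfpl_adj N a b} \<and>
     (\<forall>a b. (a, b) \<in> F \<longrightarrow> (b, a) \<notin> F) \<and>
     (\<forall>i\<in>{1..N}. deg F (Lv N i) \<le> 1 \<and> indeg F (Lv N i) = 0) \<and>
     (\<forall>i\<in>{1..N}. deg F (Rv N i) \<le> 1 \<and> outdeg F (Rv N i) = 0) \<and>
     (\<forall>i\<in>{1..N}. deg F (Bv N i) = 1) \<and>
     (\<forall>p\<in>tfpl_verts N. p \<notin> Lv N ` {1..N} \<and> p \<notin> Rv N ` {1..N} \<and> p \<notin> Bv N ` {1..N}
        \<longrightarrow> deg F p = 2) \<and>
     (\<forall>p\<in>tfpl_verts N. deg F p = 2 \<longrightarrow> indeg F p = 1 \<and> outdeg F p = 1) \<and>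
     (\<forall>i\<in>{1..N}. \<forall>j\<in>{1..N}. i \<noteq> j \<longrightarrow> \<not> joined F (Lv N i) (Lv N j)) \<and>
     (\<forall>i\<in>{1..N}. \<forall>j\<in>{1..N}. i \<noteq> j \<longrightarrow> \<not> joined F (Rv N i) (Rv N j))"

(* words in {0,1}^N as bool lists (True = 1), u_i = u ! (i-1) *)
definition has_boundary ::
  "nat \<Rightarrow> (vert \<times> vert) set \<Rightarrow> bool list \<Rightarrow> bool list \<Rightarrow> bool list \<Rightarrow> bool" where
  "has_boundary N F u v w \<longleftrightarrow>
     length u = N \<and> length v = N \<and> length w = N \<and>
     (\<forall>i\<in>{1..N}.
        (u ! (i - 1) \<longleftrightarrow> deg F (Lv N i) = 1) \<and>
        (\<not> v ! (i - 1) \<longleftrightarrow> deg F (Rv N i) = 1) \<and>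
        (w ! (i - 1) \<longrightarrow> indeg F (Bv N i) = 1) \<and>
        (\<not> w ! (i - 1) \<longrightarrow> outdeg F (Bv N i) = 1))"

definition dinv :: "bool list \<Rightarrow> nat" where
  "dinv u = card {(i, j). i < j \<and> j < length u \<and> u ! i \<and> \<not> u ! j}"

definition o_D :: "nat \<Rightarrow> (vert \<times> vert) set \<Rightarrow> nat" where
  "o_D N F = card {(a, b) \<in> F. odd_vert N a \<and> even_vert N b \<and> snd b = snd a - 1}"

definition e_U :: "nat \<Rightarrow> (vert \<times> vert) set \<Rightarrow> nat" where
  "e_U N F = card {(a, b) \<in> F. even_vert N a \<and> odd_vert N b \<and> snd b = snd a + 1}"

end

theory Submission
  imports Defs "HOL-Library.Product_Plus"
begin

type_synonym q4 = "int \<times> int \<times> int \<times> int"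

definition M8 :: "q4 \<Rightarrow> q4 \<Rightarrow> int" where
  "M8 p q = (case p of (a,b,c,d) \<Rightarrow> case q of (a',b',c',d') \<Rightarrow>
     2*a*b' - a*c' - 2*b*a' + b*c' - 2*b*d' + 3*c*a' + c*b' + c*d' + 2*d*b' - d*c')"

lemma M8_simp[simp]: "M8 (a,b,c,d) (a',b',c',d') =
     2*a*b' - a*c' - 2*b*a' + b*c' - 2*b*d' + 3*c*a' + c*b' + c*d' + 2*d*b' - d*c'"
  by (simp add: M8_def)

lemma M8_add_left: "M8 (p + q) r = M8 p r + M8 q r"
  by (cases p; cases q; cases r) (auto simp: algebra_simps)

lemma M8_add_right: "M8 r (p + q) = M8 r p + M8 r q"
  by (cases p; cases q; cases r) (auto simp: algebra_simps)

lemma M8_zero_left[simp]: "M8 0 r = 0"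
  by (cases r) (simp add: zero_prod_def)

lemma M8_zero_right[simp]: "M8 r 0 = 0"
  by (cases r) (simp add: zero_prod_def)

fun Phi :: "q4 list \<Rightarrow> int" where
  "Phi [] = 0"
| "Phi (a # xs) = M8 a (sum_list xs) + Phi xs"

lemma Phi_append: "Phi (xs @ ys) = Phi xs + Phi ys + M8 (sum_list xs) (sum_list ys)"
  by (induction xs) (auto simp: M8_add_left M8_add_right algebra_simps)

lemma Phi_step:
  assumes "a + b = c + d"
  shows "Phi (P @ [c,d] @ S) = Phi (P @ [a,b] @ S) + M8 c d - M8 a b"
proof -
  have h1: "M8 c X + M8 d X = M8 a X + M8 b X" for X
    by (metis M8_add_left assms)
  have h2: "M8 X c + M8 X d = M8 X a + M8 X b" for X
    by (metis M8_add_right assms)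
  have "Phi (P @ [c,d] @ S) - M8 c d = Phi P + Phi S + M8 c (sum_list S) + M8 d (sum_list S)
      + M8 (sum_list P) c + M8 (sum_list P) d + M8 (sum_list P) (sum_list S)"
    by (simp add: Phi_append M8_add_left M8_add_right algebra_simps)
  moreover have "Phi (P @ [a,b] @ S) - M8 a b = Phi P + Phi S + M8 a (sum_list S) + M8 b (sum_list S)
      + M8 (sum_list P) a + M8 (sum_list P) b + M8 (sum_list P) (sum_list S)"
    by (simp add: Phi_append M8_add_left M8_add_right algebra_simps)
  ultimately show ?thesis using h1[of "sum_list S"] h2[of "sum_list P"] by linarith
qed

lemma sum_step:
  assumes "a + b = c + d"
  shows "sum_list (P @ [c,d] @ S) = sum_list (P @ [a,b] @ S)"
proof -
  have "c + (d + X) = a + (b + X)" for X using assms by (metis add.assoc)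
  then show ?thesis by simp
qed

lemma Phi_zero: "Phi (P @ 0 # S) = Phi (P @ S)"
  by (simp add: Phi_append)

lemma sum_zero: "sum_list (P @ 0 # S) = sum_list (P @ S)"
  by simp


abbreviation cT :: "bool list \<Rightarrow> int" where "cT xs \<equiv> int (length (filter (\<lambda>x. x) xs))"
abbreviation cF :: "bool list \<Rightarrow> int" where "cF xs \<equiv> int (length (filter Not xs))"

lemma cT_cF: "cT xs + cF xs = int (length xs)"
  by (induction xs) auto

lemma dinv_Cons: "dinv (b # xs) = (if b then length (filter Not xs) else 0) + dinv xs"
proof -
  let ?A = "{(i, j). i < j \<and> j < length (b#xs) \<and> (b#xs) ! i \<and> \<not> (b#xs) ! j}"
  let ?B = "{(i, j). i < j \<and> j < length xs \<and> xs ! i \<and> \<not> xs ! j}"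
  let ?C = "(\<lambda>j. (0::nat, Suc j)) ` {j. j < length xs \<and> b \<and> \<not> xs ! j}"
  let ?f = "\<lambda>(i::nat,j::nat). (Suc i, Suc j)"
  have eq: "?A = ?C \<union> ?f ` ?B"
  proof (rule set_eqI, rule iffI)
    fix p assume "p \<in> ?A"
    then obtain i j where p: "p = (i,j)" "i < j" "j < Suc (length xs)" "(b#xs) ! i" "\<not> (b#xs) ! j"
      by auto
    then obtain j' where j': "j = Suc j'" by (cases j) auto
    show "p \<in> ?C \<union> ?f ` ?B"
    proof (cases i)
      case 0 then show ?thesis using p j' by auto
    next
      case (Suc i')
      then have "(i', j') \<in> ?B" using p j' by auto
      then show ?thesis using p j' Suc by (auto intro!: image_eqI[where x="(i',j')"])
    qed
  next
    fix p assume "p \<in> ?C \<union> ?f ` ?B"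
    then show "p \<in> ?A" by auto
  qed
  have fin: "finite ?B"
    by (rule finite_subset[of _ "{..<length xs} \<times> {..<length xs}"]) auto
  have disj: "?C \<inter> ?f ` ?B = {}" by auto
  have injf: "inj_on ?f ?B" by (auto simp: inj_on_def)
  have "card ?A = card ?C + card (?f ` ?B)"
    unfolding eq by (rule card_Un_disjoint) (use fin disj in auto)
  also have "card (?f ` ?B) = card ?B" using injf by (rule card_image)
  also have "card ?C = card {j. j < length xs \<and> b \<and> \<not> xs ! j}"
    by (rule card_image) (auto simp: inj_on_def)
  also have "card {j. j < length xs \<and> b \<and> \<not> xs ! j} = (if b then length (filter Not xs) else 0)"
    by (cases b) (auto simp: length_filter_conv_card)
  finally show ?thesis unfolding dinv_def by simp
qed

lemma dinv_Nil[simp]: "dinv [] = 0"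
  by (simp add: dinv_def)

definition Lf :: "bool \<Rightarrow> q4" where
  "Lf b = (1, 1, of_bool b, 2 * of_bool b - 2)"

lemma sum_Lf: "sum_list (map Lf u) = (int (length u), int (length u), cT u, 2 * cT u - 2 * int (length u))"
  by (induction u) (auto simp: Lf_def zero_prod_def)

lemma Phi_Lf: "Phi (map Lf u) = 8 * int (dinv u) - 2 * int (length u) * cT u + 4 * (cT u)^2 - 2 * cT u"
proof (induction u)
  case Nil then show ?case by simp
next
  case (Cons b u)
  have c: "cF u = int (length u) - cT u" using cT_cF[of u] by simp
  have e: "Phi (map Lf (b#u)) = M8 (Lf b) (int (length u), int (length u), cT u, 2 * cT u - 2 * int (length u))
     + (8 * int (dinv u) - 2 * int (length u) * cT u + 4 * (cT u)^2 - 2 * cT u)"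
    using Cons.IH by (simp add: sum_Lf)
  show ?case unfolding e
    by (cases b) (auto simp: dinv_Cons Lf_def c algebra_simps power2_eq_square)
qed

definition Bf :: "bool \<Rightarrow> q4" where
  "Bf b = (1, 0, if b then 1 else -1, -1)"

definition od4 :: q4 where "od4 = (1, 0, 0, -1)"

definition Blist :: "bool list \<Rightarrow> q4 list" where
  "Blist w = concat (map (\<lambda>b. [Bf b, od4]) w)"

lemma Blist_Cons: "Blist (b # w) = Bf b # od4 # Blist w"
  by (simp add: Blist_def)

lemma sum_Blist: "sum_list (Blist w) = (2 * int (length w), 0, 2 * cT w - int (length w), - 2 * int (length w))"
  by (induction w) (auto simp: Blist_def Bf_def od4_def zero_prod_def)

lemma Phi_Blist: "Phi (Blist w) = 8 * int (dinv w) - 2 * (int (length w))^2 + 4 * (cT w)^2"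
proof (induction w)
  case Nil then show ?case by (simp add: Blist_def)
next
  case (Cons b w)
  have c: "cF w = int (length w) - cT w" using cT_cF[of w] by simp
  have e: "Phi (Blist (b#w)) = M8 (Bf b) (od4 + (2 * int (length w), 0, 2 * cT w - int (length w), - 2 * int (length w)))
      + M8 od4 (2 * int (length w), 0, 2 * cT w - int (length w), - 2 * int (length w))
      + (8 * int (dinv w) - 2 * (int (length w))^2 + 4 * (cT w)^2)"
    using Cons.IH by (simp add: Blist_Cons sum_Blist)
  show ?case unfolding e
    by (cases b) (auto simp: dinv_Cons Bf_def od4_def c algebra_simps power2_eq_square)
qed

definition Rf :: "bool \<Rightarrow> q4" where
  "Rf b = (-1, 1, if b then 0 else 1, if b then 2 else 0)"

lemma sum_Rf: "sum_list (map Rf xs) = (- int (length xs), int (length xs), int (length xs) - cT xs, 2 * cT xs)"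
  by (induction xs) (auto simp: Rf_def zero_prod_def)

lemma Phi_Rf: "Phi (map Rf (rev v)) = - 8 * int (dinv v) + 4 * int (length v) * cT v - 4 * (cT v)^2"
proof (induction v)
  case Nil then show ?case by simp
next
  case (Cons b v)
  have c: "cF v = int (length v) - cT v" using cT_cF[of v] by simp
  have "Phi (map Rf (rev (b # v))) = Phi (map Rf (rev v)) + M8 (sum_list (map Rf (rev v))) (Rf b)"
    by (simp add: Phi_append)
  also have "sum_list (map Rf (rev v)) = (- int (length v), int (length v), int (length v) - cT v, 2 * cT v)"
    using sum_Rf[of "rev v"] by (simp add: rev_filter[symmetric])
  finally show ?case unfolding Cons.IH
    by (cases b) (auto simp: dinv_Cons Rf_def c algebra_simps power2_eq_square)
qed


definition isL :: "nat \<Rightarrow> vert \<Rightarrow> bool" where "isL N p \<longleftrightarrow> p \<in> Lv N ` {1..N}"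
definition isR :: "nat \<Rightarrow> vert \<Rightarrow> bool" where "isR N p \<longleftrightarrow> p \<in> Rv N ` {1..N}"
definition isB :: "nat \<Rightarrow> vert \<Rightarrow> bool" where "isB N p \<longleftrightarrow> p \<in> Bv N ` {1..N}"

lemma verts_iff: "(x, y) \<in> tfpl_verts N \<longleftrightarrow> 0 \<le> y \<and> y < int N \<and> \<bar>x\<bar> \<le> int N - y"
  by (simp add: tfpl_verts_def)

lemma isL_iff: "isL N (x, y) \<longleftrightarrow> 0 \<le> y \<and> y < int N \<and> x = - (int N - y)"
proof
  assume "isL N (x, y)"
  then obtain i where "i \<in> {1..N}" "(x,y) = Lv N i" by (auto simp: isL_def)
  then show "0 \<le> y \<and> y < int N \<and> x = - (int N - y)" by (auto simp: Lv_def)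
next
  assume h: "0 \<le> y \<and> y < int N \<and> x = - (int N - y)"
  then have "nat (y+1) \<in> {1..N}" "(x,y) = Lv N (nat (y+1))" by (auto simp: Lv_def)
  then show "isL N (x, y)" unfolding isL_def by blast
qed

lemma isR_iff: "isR N (x, y) \<longleftrightarrow> 0 \<le> y \<and> y < int N \<and> x = int N - y"
proof
  assume "isR N (x, y)"
  then obtain i where "i \<in> {1..N}" "(x,y) = Rv N i" by (auto simp: isR_def)
  then show "0 \<le> y \<and> y < int N \<and> x = int N - y" by (auto simp: Rv_def)
next
  assume h: "0 \<le> y \<and> y < int N \<and> x = int N - y"
  then have "nat (int N - y) \<in> {1..N}" "(x,y) = Rv N (nat (int N - y))" by (auto simp: Rv_def)
  then show "isR N (x, y)" unfolding isR_def by blast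
qed

lemma isB_iff: "isB N (x, y) \<longleftrightarrow> y = 0 \<and> \<bar>x\<bar> \<le> int N \<and> odd (x + int N)"
proof
  assume "isB N (x, y)"
  then obtain i where "i \<in> {1..N}" "(x,y) = Bv N i" by (auto simp: isB_def)
  then show "y = 0 \<and> \<bar>x\<bar> \<le> int N \<and> odd (x + int N)" by (auto simp: Bv_def)
next
  assume h: "y = 0 \<and> \<bar>x\<bar> \<le> int N \<and> odd (x + int N)"
  then obtain k where k: "x + int N = 2 * k + 1" by (meson oddE)
  have "x \<noteq> int N" "x \<noteq> - int N" using h by auto
  then have "0 \<le> k" "k < int N" using h k by auto
  then have "nat (k+1) \<in> {1..N}" "(x,y) = Bv N (nat (k+1))" using h k by (auto simp: Bv_def)
  then show "isB N (x, y)" unfolding isB_def by blast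
qed

lemma odd_vert_iff: "odd_vert N (x, y) \<longleftrightarrow> even (x + y + int N)"
  by (simp add: odd_vert_def)

definition sg :: "nat \<Rightarrow> vert \<Rightarrow> int" where
  "sg N p = (if odd_vert N p then 1 else -1)"

definition ind :: "(vert \<times> vert) set \<Rightarrow> vert \<Rightarrow> vert \<Rightarrow> int" where
  "ind F a b = (if (a, b) \<in> F then 1 else 0)"

definition nei :: "(vert \<times> vert) set \<Rightarrow> vert \<Rightarrow> vert \<Rightarrow> int" where
  "nei F a b = (if (a, b) \<in> F \<or> (b, a) \<in> F then 1 else 0)"

definition Vs :: "nat \<Rightarrow> (vert \<times> vert) set \<Rightarrow> int \<Rightarrow> int \<Rightarrow> q4" where
  "Vs N F x y = (if isB N (x, y) then (1, 0, if indeg F (x, y) = 1 then 1 else -1, -1)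
     else if isL N (x, y - 1) \<or> isR N (x, y - 1) then 0
     else (1, 0, ind F (x, y) (x, y - 1) - ind F (x, y - 1) (x, y),
           (2 * nei F (x, y) (x, y - 1) - 1) * sg N (x, y)))"

definition Hs :: "nat \<Rightarrow> (vert \<times> vert) set \<Rightarrow> int \<Rightarrow> int \<Rightarrow> q4" where
  "Hs N F x y = (if isL N (x + 1, y) then Lf (deg F (x + 1, y) = 1)
     else if isR N (x, y) then Rf (deg F (x, y) \<noteq> 1)
     else (0, 1, ind F (x, y) (x + 1, y) - ind F (x + 1, y) (x, y),
           (2 * nei F (x, y) (x + 1, y) - 1) * sg N (x, y)))"

definition loc :: "nat \<Rightarrow> (vert \<times> vert) set \<Rightarrow> int \<Rightarrow> int \<Rightarrow> int" where
  "loc N F x y = M8 (Vs N F x y) (Hs N F x y) - M8 (Hs N F (x - 1) y) (Vs N F x (y + 1))"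


definition wt :: "int \<Rightarrow> bool \<Rightarrow> bool \<Rightarrow> bool \<Rightarrow> bool \<Rightarrow> bool \<Rightarrow> bool \<Rightarrow> int" where
  "wt s oL iR iU oU iD oD = (let nb = (if s = -1 then iU \<or> oU else iD \<or> oD) in
     4 * of_bool nb + 8 * of_bool (iR \<and> oL) + 8 * of_bool (nb \<and> (iR \<or> oL)))"

abbreviation bi :: "bool \<Rightarrow> int" where "bi b \<equiv> (if b then 1 else 0)"
abbreviation bn :: "bool \<Rightarrow> bool \<Rightarrow> int" where "bn a b \<equiv> (if a \<or> b then 1 else 0)"

lemma one4: "bi a + bi b + bi c + bi d = 1 \<Longrightarrow>
   (a \<and> \<not> b \<and> \<not> c \<and> \<not> d) \<or> (\<not> a \<and> b \<and> \<not> c \<and> \<not> d) \<or> (\<not> a \<and> \<not> b \<and> c \<and> \<not> d) \<or> (\<not> a \<and> \<not> b \<and> \<not> c \<and> d)"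
  by (cases a; cases b; cases c; cases d) auto

lemma core_interior:
  fixes s :: int
  assumes s: "s = 1 \<or> s = -1"
    and inn: "bi iL + bi iR + bi iU + bi iD = 1"
    and out: "bi oL + bi oR + bi oU + bi oD = 1"
    and as: "\<not> (iL \<and> oL)" "\<not> (iR \<and> oR)" "\<not> (iU \<and> oU)" "\<not> (iD \<and> oD)"
  defines "hL \<equiv> (0::int, 1::int, bi iL - bi oL, (2 * bn iL oL - 1) * (- s))"
    and "up \<equiv> (1::int, 0::int, bi iU - bi oU, (2 * bn iU oU - 1) * (- s))"
    and "dn \<equiv> (1::int, 0::int, bi oD - bi iD, (2 * bn iD oD - 1) * s)"
    and "hR \<equiv> (0::int, 1::int, bi oR - bi iR, (2 * bn iR oR - 1) * s)"
  shows "hL + up = dn + hR \<and> M8 dn hR - M8 hL up = wt s oL iR iU oU iD oD"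
  using one4[OF inn] one4[OF out] s as unfolding hL_def up_def dn_def hR_def wt_def
  by (elim disjE conjE; simp)


lemma core_L:
  assumes "\<not> (oR \<and> oD)"
  defines "dn \<equiv> (1::int, 0::int, bi oD, 2 * bi oD - 1)"
    and "hR \<equiv> (0::int, 1::int, bi oR, 2 * bi oR - 1)"
  shows "Lf (oR \<or> oD) + 0 = dn + hR \<and> M8 dn hR - M8 (Lf (oR \<or> oD)) 0 = wt 1 False False False False False oD"
  using assms unfolding dn_def hR_def wt_def Lf_def
  by (cases oR; cases oD; simp add: zero_prod_def)

lemma core_R:
  assumes "\<not> (iL \<and> iD)"
  defines "hL \<equiv> (0::int, 1::int, bi iL, 1 - 2 * bi iL)"
    and "dn \<equiv> (1::int, 0::int, - bi iD, 2 * bi iD - 1)"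
  shows "hL + 0 = dn + Rf (\<not> (iL \<or> iD)) \<and> M8 dn (Rf (\<not> (iL \<or> iD))) - M8 hL 0 = wt 1 False False False False iD False"
  using assms unfolding dn_def hL_def wt_def Rf_def
  by (cases iL; cases iD; simp add: zero_prod_def)

lemma one6: "bi a + bi b + bi c + bi d + bi e + bi f = 1 \<Longrightarrow>
   (a \<and> \<not> b \<and> \<not> c \<and> \<not> d \<and> \<not> e \<and> \<not> f) \<or> (\<not> a \<and> b \<and> \<not> c \<and> \<not> d \<and> \<not> e \<and> \<not> f) \<or>
   (\<not> a \<and> \<not> b \<and> c \<and> \<not> d \<and> \<not> e \<and> \<not> f) \<or> (\<not> a \<and> \<not> b \<and> \<not> c \<and> d \<and> \<not> e \<and> \<not> f) \<or>
   (\<not> a \<and> \<not> b \<and> \<not> c \<and> \<not> d \<and> e \<and> \<not> f) \<or> (\<not> a \<and> \<not> b \<and> \<not> c \<and> \<not> d \<and> \<not> e \<and> f)"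
  by (cases a; cases b; cases c; cases d; cases e; cases f) auto

lemma core_B:
  assumes d1: "bi iL + bi oL + bi iR + bi oR + bi iU + bi oU = 1"
  defines "hL \<equiv> (0::int, 1::int, bi iL - bi oL, 2 * bn iL oL - 1)"
    and "up \<equiv> (1::int, 0::int, bi iU - bi oU, 2 * bn iU oU - 1)"
    and "dn \<equiv> (1::int, 0::int, if iL \<or> iR \<or> iU then 1 else -1, -1)"
    and "hR \<equiv> (0::int, 1::int, bi oR - bi iR, - (2 * bn iR oR - 1))"
  shows "hL + up = dn + hR \<and> M8 dn hR - M8 hL up = wt (-1) oL iR iU oU False False"
  using one6[OF d1] unfolding hL_def up_def dn_def hR_def wt_def
  by (elim disjE conjE; simp)


lemma TF_sub: "oriented_TFPL N F \<Longrightarrow> F \<subseteq> {(a, b). tfpl_adj N a b}"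
  unfolding oriented_TFPL_def by (elim conjE)

lemma TF_anti: "oriented_TFPL N F \<Longrightarrow> \<forall>a b. (a, b) \<in> F \<longrightarrow> (b, a) \<notin> F"
  unfolding oriented_TFPL_def by (elim conjE)

lemma TF_L: "oriented_TFPL N F \<Longrightarrow> \<forall>i\<in>{1..N}. deg F (Lv N i) \<le> 1 \<and> indeg F (Lv N i) = 0"
  unfolding oriented_TFPL_def by (elim conjE)

lemma TF_R: "oriented_TFPL N F \<Longrightarrow> \<forall>i\<in>{1..N}. deg F (Rv N i) \<le> 1 \<and> outdeg F (Rv N i) = 0"
  unfolding oriented_TFPL_def by (elim conjE)

lemma TF_B: "oriented_TFPL N F \<Longrightarrow> \<forall>i\<in>{1..N}. deg F (Bv N i) = 1"
  unfolding oriented_TFPL_def by (elim conjE)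

lemma TF_I: "oriented_TFPL N F \<Longrightarrow> \<forall>p\<in>tfpl_verts N. p \<notin> Lv N ` {1..N} \<and> p \<notin> Rv N ` {1..N} \<and> p \<notin> Bv N ` {1..N}
        \<longrightarrow> deg F p = 2"
  unfolding oriented_TFPL_def by (elim conjE)

lemma TF_2: "oriented_TFPL N F \<Longrightarrow> \<forall>p\<in>tfpl_verts N. deg F p = 2 \<longrightarrow> indeg F p = 1 \<and> outdeg F p = 1"
  unfolding oriented_TFPL_def by (elim conjE)

lemma TF_adj:
  assumes "oriented_TFPL N F" "(a, b) \<in> F"
  shows "a \<in> tfpl_verts N \<and> b \<in> tfpl_verts N \<and> \<bar>fst a - fst b\<bar> + \<bar>snd a - snd b\<bar> = 1"
proof -
  have "tfpl_adj N a b" using TF_sub[OF assms(1)] assms(2) by blast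
  then show ?thesis unfolding tfpl_adj_def .
qed

lemma TF_antisym:
  assumes "oriented_TFPL N F" "(a, b) \<in> F"
  shows "(b, a) \<notin> F"
  using TF_anti[OF assms(1)] assms(2) by blast

lemma card4:
  assumes "\<And>a. P a \<Longrightarrow> a = p1 \<or> a = p2 \<or> a = p3 \<or> a = p4" "distinct [p1, p2, p3, p4]"
  shows "int (card {a. P a}) = bi (P p1) + bi (P p2) + bi (P p3) + bi (P p4)"
proof -
  have e: "{a. P a} = set (filter P [p1, p2, p3, p4])" using assms(1) by auto
  have "card (set (filter P [p1, p2, p3, p4])) = length (filter P [p1, p2, p3, p4])"
    by (rule distinct_card, rule distinct_filter, rule assms(2))
  then show ?thesis unfolding e by simp
qed

lemma adj4:
  fixes a :: vert
  assumes "\<bar>fst a - x\<bar> + \<bar>snd a - y\<bar> = 1"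
  shows "a = (x - 1, y) \<or> a = (x + 1, y) \<or> a = (x, y + 1) \<or> a = (x, y - 1)"
proof -
  obtain a1 a2 where a: "a = (a1, a2)" by (cases a)
  have "\<bar>a1 - x\<bar> + \<bar>a2 - y\<bar> = 1" using assms a by simp
  then have "(a1 = x - 1 \<and> a2 = y) \<or> (a1 = x + 1 \<and> a2 = y) \<or> (a1 = x \<and> a2 = y + 1) \<or> (a1 = x \<and> a2 = y - 1)"
    by arith
  then show ?thesis using a by auto
qed

lemma indeg_4:
  assumes "oriented_TFPL N F"
  shows "int (indeg F (x, y)) = bi (((x - 1, y), (x, y)) \<in> F) + bi (((x + 1, y), (x, y)) \<in> F)
     + bi (((x, y + 1), (x, y)) \<in> F) + bi (((x, y - 1), (x, y)) \<in> F)"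
  unfolding indeg_def
proof (rule card4)
  fix a assume h: "(a, (x, y)) \<in> F"
  have "\<bar>fst a - x\<bar> + \<bar>snd a - y\<bar> = 1" using TF_adj[OF assms h] by simp
  then show "a = (x - 1, y) \<or> a = (x + 1, y) \<or> a = (x, y + 1) \<or> a = (x, y - 1)" by (rule adj4)
qed simp

lemma outdeg_4:
  assumes "oriented_TFPL N F"
  shows "int (outdeg F (x, y)) = bi (((x, y), (x - 1, y)) \<in> F) + bi (((x, y), (x + 1, y)) \<in> F)
     + bi (((x, y), (x, y + 1)) \<in> F) + bi (((x, y), (x, y - 1)) \<in> F)"
  unfolding outdeg_def
proof (rule card4)
  fix a assume h: "((x, y), a) \<in> F"
  have "\<bar>fst a - x\<bar> + \<bar>snd a - y\<bar> = 1" using TF_adj[OF assms h] by (simp add: abs_minus_commute)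
  then show "a = (x - 1, y) \<or> a = (x + 1, y) \<or> a = (x, y + 1) \<or> a = (x, y - 1)" by (rule adj4)
qed simp

lemma nonvert:
  assumes "oriented_TFPL N F" "a \<notin> tfpl_verts N"
  shows "(a, b) \<notin> F" "(b, a) \<notin> F"
  using TF_adj[OF assms(1)] assms(2) by blast+


lemma sg_cases: "sg N p = 1 \<or> sg N p = -1"
  by (simp add: sg_def)

lemma sg_left: "sg N (x - 1, y) = - sg N (x, y)"
proof -
  have "even (x - 1 + y + int N) \<longleftrightarrow> \<not> even (x + y + int N)" by presburger
  then show ?thesis by (simp add: sg_def odd_vert_def)
qed

lemma sg_up: "sg N (x, y + 1) = - sg N (x, y)"
proof -
  have "even (x + (y + 1) + int N) \<longleftrightarrow> \<not> even (x + y + int N)" by presburger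
  then show ?thesis by (simp add: sg_def odd_vert_def)
qed

lemma Hs_normal:
  "\<not> isL N (x + 1, y) \<Longrightarrow> \<not> isR N (x, y) \<Longrightarrow>
   Hs N F x y = (0, 1, bi (((x, y), (x + 1, y)) \<in> F) - bi (((x + 1, y), (x, y)) \<in> F),
     (2 * bn (((x + 1, y), (x, y)) \<in> F) (((x, y), (x + 1, y)) \<in> F) - 1) * sg N (x, y))"
  unfolding Hs_def ind_def nei_def by (simp add: disj_commute)

lemma Vs_normal:
  "\<not> isB N (x, y) \<Longrightarrow> \<not> isL N (x, y - 1) \<Longrightarrow> \<not> isR N (x, y - 1) \<Longrightarrow>
   Vs N F x y = (1, 0, bi (((x, y), (x, y - 1)) \<in> F) - bi (((x, y - 1), (x, y)) \<in> F),
     (2 * bn (((x, y - 1), (x, y)) \<in> F) (((x, y), (x, y - 1)) \<in> F) - 1) * sg N (x, y))"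
  unfolding Vs_def ind_def nei_def by (simp add: disj_commute)

lemma vertex_lemma:
  assumes TF: "oriented_TFPL N F" and p: "(x, y) \<in> tfpl_verts N"
  defines "iL \<equiv> ((x - 1, y), (x, y)) \<in> F" and "oL \<equiv> ((x, y), (x - 1, y)) \<in> F"
    and "iR \<equiv> ((x + 1, y), (x, y)) \<in> F" and "oR \<equiv> ((x, y), (x + 1, y)) \<in> F"
    and "iU \<equiv> ((x, y + 1), (x, y)) \<in> F" and "oU \<equiv> ((x, y), (x, y + 1)) \<in> F"
    and "iD \<equiv> ((x, y - 1), (x, y)) \<in> F" and "oD \<equiv> ((x, y), (x, y - 1)) \<in> F"
  shows "Hs N F (x - 1) y + Vs N F x (y + 1) = Vs N F x y + Hs N F x y \<and>
         loc N F x y = wt (sg N (x, y)) oL iR iU oU iD oD"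
proof -
  let ?n = "int N"
  have pv: "0 \<le> y" "y < ?n" "\<bar>x\<bar> \<le> ?n - y" using p by (auto simp: verts_iff)
  have indg: "int (indeg F (x, y)) = bi iL + bi iR + bi iU + bi iD"
    using indeg_4[OF TF, of x y] unfolding iL_def iR_def iU_def iD_def .
  have outdg: "int (outdeg F (x, y)) = bi oL + bi oR + bi oU + bi oD"
    using outdeg_4[OF TF, of x y] unfolding oL_def oR_def oU_def oD_def .
  have dg: "int (deg F (x, y)) = int (indeg F (x, y)) + int (outdeg F (x, y))"
    by (simp add: deg_def)
  have as: "\<not> (iL \<and> oL)" "\<not> (iR \<and> oR)" "\<not> (iU \<and> oU)" "\<not> (iD \<and> oD)"
    unfolding iL_def oL_def iR_def oR_def iU_def oU_def iD_def oD_def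
    using TF_antisym[OF TF] by blast+
  have sl: "sg N (x - 1, y) = - sg N (x, y)" by (rule sg_left)
  have su: "sg N (x, y + 1) = - sg N (x, y)" by (rule sg_up)
  have locd: "loc N F x y = M8 (Vs N F x y) (Hs N F x y) - M8 (Hs N F (x - 1) y) (Vs N F x (y + 1))"
    by (simp add: loc_def)
  show ?thesis
  proof (cases "isL N (x, y)")
    case True
    then have xL: "x = - (?n - y)" by (simp add: isL_iff)
    then obtain i where i: "i \<in> {1..N}" "(x, y) = Lv N i" using True by (auto simp: isL_def)
    have "deg F (x, y) \<le> 1" "indeg F (x, y) = 0" using TF_L[OF TF] i by auto
    have nv1: "(x - 1, y) \<notin> tfpl_verts N" "(x, y + 1) \<notin> tfpl_verts N" using xL by (auto simp: verts_iff)
    have f1: "\<not> iL" "\<not> oL" "\<not> iU" "\<not> oU" unfolding iL_def oL_def iU_def oU_def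
      using nonvert[OF TF nv1(1)] nonvert[OF TF nv1(2)] by auto
    have f2: "\<not> iR" "\<not> iD" using indg \<open>indeg F (x, y) = 0\<close> by (auto split: if_splits)
    have f3: "\<not> (oR \<and> oD)" using dg indg outdg f1 f2 \<open>deg F (x, y) \<le> 1\<close> by (auto split: if_splits)
    have dg1: "(deg F (x, y) = 1) = (oR \<or> oD)" using dg indg outdg f1 f2 f3 by (auto split: if_splits)
    have sgp: "sg N (x, y) = 1" using xL by (simp add: sg_def odd_vert_def)
    have s1: "Hs N F (x - 1) y = Lf (oR \<or> oD)" using True dg1 by (simp add: Hs_def)
    have s2: "Vs N F x (y + 1) = 0" using True pv(1) by (simp add: Vs_def isB_iff)
    have s3: "Vs N F x y = (1, 0, bi oD, 2 * bi oD - 1)"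
    proof -
      have "\<not> isB N (x, y)" "\<not> isL N (x, y - 1)" "\<not> isR N (x, y - 1)"
        using xL pv by (auto simp: isB_iff isL_iff isR_iff)
      then show ?thesis using Vs_normal[of N x y F] sgp f2 unfolding oD_def iD_def by simp
    qed
    have s4: "Hs N F x y = (0, 1, bi oR, 2 * bi oR - 1)"
    proof -
      have "\<not> isL N (x + 1, y)" "\<not> isR N (x, y)"
        using xL pv by (auto simp: isL_iff isR_iff)
      then show ?thesis using Hs_normal[of N x y F] sgp f2 unfolding oR_def iR_def by simp
    qed
    show ?thesis using core_L[OF f3] unfolding locd s1 s2 s3 s4 sgp using f1 f2 by simp
  next
    case notL: False
    show ?thesis
    proof (cases "isR N (x, y)")
      case True
      then have xR: "x = ?n - y" by (simp add: isR_iff)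
      then obtain i where i: "i \<in> {1..N}" "(x, y) = Rv N i" using True by (auto simp: isR_def)
      have "deg F (x, y) \<le> 1" "outdeg F (x, y) = 0" using TF_R[OF TF] i by auto
      have nv1: "(x + 1, y) \<notin> tfpl_verts N" "(x, y + 1) \<notin> tfpl_verts N" using xR by (auto simp: verts_iff)
      have f1: "\<not> iR" "\<not> oR" "\<not> iU" "\<not> oU" unfolding iR_def oR_def iU_def oU_def
        using nonvert[OF TF nv1(1)] nonvert[OF TF nv1(2)] by auto
      have f2: "\<not> oL" "\<not> oD" using outdg \<open>outdeg F (x, y) = 0\<close> by (auto split: if_splits)
      have f3: "\<not> (iL \<and> iD)" using dg indg outdg f1 f2 \<open>deg F (x, y) \<le> 1\<close> by (auto split: if_splits)
      have dg1: "(deg F (x, y) \<noteq> 1) = (\<not> (iL \<or> iD))" using dg indg outdg f1 f2 f3 by (auto split: if_splits)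
      have sgp: "sg N (x, y) = 1" using xR by (simp add: sg_def odd_vert_def)
      have s1: "Hs N F (x - 1) y = (0, 1, bi iL, 1 - 2 * bi iL)"
      proof -
        have "\<not> isL N (x - 1 + 1, y)" "\<not> isR N (x - 1, y)"
          using xR pv by (auto simp: isL_iff isR_iff)
        then show ?thesis using Hs_normal[of N "x - 1" y F] sgp sl f2 unfolding oL_def iL_def by simp
      qed
      have s2: "Vs N F x (y + 1) = 0" using True pv(1) by (simp add: Vs_def isB_iff)
      have s3: "Vs N F x y = (1, 0, - bi iD, 2 * bi iD - 1)"
      proof -
        have "\<not> isB N (x, y)" "\<not> isL N (x, y - 1)" "\<not> isR N (x, y - 1)"
          using xR pv by (auto simp: isB_iff isL_iff isR_iff)
        then show ?thesis using Vs_normal[of N x y F] sgp f2 unfolding oD_def iD_def by simp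
      qed
      have s4: "Hs N F x y = Rf (\<not> (iL \<or> iD))"
      proof -
        have "\<not> isL N (x + 1, y)" using xR pv by (auto simp: isL_iff)
        then show ?thesis using True dg1 by (simp add: Hs_def)
      qed
      show ?thesis using core_R[OF f3] unfolding locd s1 s2 s3 s4 sgp using f1 f2 by simp
    next
      case notR: False
      show ?thesis
      proof (cases "isB N (x, y)")
        case True
        then have y0: "y = 0" and ox: "odd (x + ?n)" by (auto simp: isB_iff)
        obtain i where i: "i \<in> {1..N}" "(x, y) = Bv N i" using True unfolding isB_def by blast
        have "deg F (x, y) = 1" using TF_B[OF TF] i by auto
        have nv1: "(x, y - 1) \<notin> tfpl_verts N" using y0 by (auto simp: verts_iff)
        have f1: "\<not> iD" "\<not> oD" unfolding iD_def oD_def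
          using nonvert[OF TF nv1(1)] by auto
        have d1: "bi iL + bi oL + bi iR + bi oR + bi iU + bi oU = 1"
          using dg indg outdg f1 \<open>deg F (x, y) = 1\<close> by simp
        have in1: "(indeg F (x, y) = 1) = (iL \<or> iR \<or> iU)"
        proof -
          have "int (indeg F (x, y)) = 1 \<longleftrightarrow> (iL \<or> iR \<or> iU)"
            using indg f1 d1 by (cases iL; cases iR; cases iU; cases oL; cases oR; cases oU; simp)
          then show ?thesis by linarith
        qed
        have sgp: "sg N (x, y) = -1" using y0 ox by (simp add: sg_def odd_vert_def)
        have s1: "Hs N F (x - 1) y = (0, 1, bi iL - bi oL, 2 * bn iL oL - 1)"
        proof -
          have "\<not> isL N (x - 1 + 1, y)" "\<not> isR N (x - 1, y)"
            using y0 ox pv by (auto simp: isL_iff isR_iff)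
          then show ?thesis using Hs_normal[of N "x - 1" y F] sgp sl unfolding oL_def iL_def by simp
        qed
        have s2: "Vs N F x (y + 1) = (1, 0, bi iU - bi oU, 2 * bn iU oU - 1)"
        proof -
          have "\<not> isB N (x, y + 1)" "\<not> isL N (x, y + 1 - 1)" "\<not> isR N (x, y + 1 - 1)"
            using y0 ox pv by (auto simp: isB_iff isL_iff isR_iff)
          then show ?thesis using Vs_normal[of N x "y + 1" F] sgp su unfolding oU_def iU_def by simp
        qed
        have s3: "Vs N F x y = (1, 0, if iL \<or> iR \<or> iU then 1 else -1, -1)"
          using True in1 by (simp add: Vs_def)
        have s4: "Hs N F x y = (0, 1, bi oR - bi iR, - (2 * bn iR oR - 1))"
        proof -
          have "\<not> isL N (x + 1, y)" using y0 ox pv by (auto simp: isL_iff)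
          then show ?thesis using Hs_normal[of N x y F] notR sgp unfolding oR_def iR_def by simp
        qed
        show ?thesis using core_B[OF d1] unfolding locd s1 s2 s3 s4 sgp using f1 by simp
      next
        case notB: False
        have "deg F (x, y) = 2" using TF_I[OF TF] p notL notR notB by (auto simp: isL_def isR_def isB_def)
        then have "indeg F (x, y) = 1" "outdeg F (x, y) = 1" using TF_2[OF TF] p by auto
        then have inn: "bi iL + bi iR + bi iU + bi iD = 1" and out: "bi oL + bi oR + bi oU + bi oD = 1"
          using indg outdg by (auto split: if_splits)
        have s1: "Hs N F (x - 1) y = (0, 1, bi iL - bi oL, (2 * bn iL oL - 1) * (- sg N (x, y)))"
        proof -
          have "\<not> isL N (x - 1 + 1, y)" "\<not> isR N (x - 1, y)"
            using notL pv by (auto simp: isL_iff isR_iff)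
          then show ?thesis using Hs_normal[of N "x - 1" y F] sl unfolding oL_def iL_def by simp
        qed
        have s2: "Vs N F x (y + 1) = (1, 0, bi iU - bi oU, (2 * bn iU oU - 1) * (- sg N (x, y)))"
        proof -
          have "\<not> isB N (x, y + 1)" "\<not> isL N (x, y + 1 - 1)" "\<not> isR N (x, y + 1 - 1)"
            using notL notR pv by (auto simp: isB_iff)
          then show ?thesis using Vs_normal[of N x "y + 1" F] su unfolding oU_def iU_def by simp
        qed
        have s3: "Vs N F x y = (1, 0, bi oD - bi iD, (2 * bn iD oD - 1) * sg N (x, y))"
        proof -
          have "\<not> isL N (x, y - 1)" "\<not> isR N (x, y - 1)"
            using pv by (auto simp: isL_iff isR_iff)
          then show ?thesis using Vs_normal[of N x y F] notB unfolding oD_def iD_def by simp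
        qed
        have s4: "Hs N F x y = (0, 1, bi oR - bi iR, (2 * bn iR oR - 1) * sg N (x, y))"
        proof -
          have "\<not> isL N (x + 1, y)" using pv by (auto simp: isL_iff)
          then show ?thesis using Hs_normal[of N x y F] notR unfolding oR_def iR_def by simp
        qed
        show ?thesis using core_interior[OF sg_cases inn out as] unfolding locd s1 s2 s3 s4 by simp
      qed
    qed
  qed
qed


definition Lpart :: "nat \<Rightarrow> (vert \<times> vert) set \<Rightarrow> int \<Rightarrow> q4 list" where
  "Lpart N F y = map (\<lambda>j. Hs N F (- (int N - j) - 1) j) [0..y - 1]"

definition Rpart :: "nat \<Rightarrow> (vert \<times> vert) set \<Rightarrow> int \<Rightarrow> q4 list" where
  "Rpart N F y = map (\<lambda>j. Hs N F (int N - j) j) [y + 1..int N - 1]"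

definition fr :: "nat \<Rightarrow> (vert \<times> vert) set \<Rightarrow> int \<Rightarrow> int \<Rightarrow> q4 list" where
  "fr N F y x0 = Lpart N F y @ map (\<lambda>x. Vs N F x y) [- (int N - y)..x0 - 1] @ [Hs N F (x0 - 1) y]
     @ map (\<lambda>x. Vs N F x (y + 1)) [x0..int N - y] @ Rpart N F y"

lemma fr_step:
  assumes TF: "oriented_TFPL N F" and y: "0 \<le> y" "y < int N"
    and x0: "- (int N - y) \<le> x0" "x0 \<le> int N - y"
  shows "Phi (fr N F y (x0 + 1)) = Phi (fr N F y x0) + loc N F x0 y \<and>
         sum_list (fr N F y (x0 + 1)) = sum_list (fr N F y x0)"
proof -
  have pv: "(x0, y) \<in> tfpl_verts N" using y x0 by (auto simp: verts_iff)
  have cons: "Hs N F (x0 - 1) y + Vs N F x0 (y + 1) = Vs N F x0 y + Hs N F x0 y"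
    and lc: "loc N F x0 y = M8 (Vs N F x0 y) (Hs N F x0 y) - M8 (Hs N F (x0 - 1) y) (Vs N F x0 (y + 1))"
    using vertex_lemma[OF TF pv] by (auto simp: loc_def)
  let ?P = "Lpart N F y @ map (\<lambda>x. Vs N F x y) [- (int N - y)..x0 - 1]"
  let ?S = "map (\<lambda>x. Vs N F x (y + 1)) [x0 + 1..int N - y] @ Rpart N F y"
  have e1: "fr N F y (x0 + 1) = ?P @ [Vs N F x0 y, Hs N F x0 y] @ ?S"
  proof -
    have "[- (int N - y)..x0] = [- (int N - y)..x0 - 1] @ [x0]" using x0 by (simp add: upto_rec2)
    then show ?thesis by (simp add: fr_def)
  qed
  have e2: "fr N F y x0 = ?P @ [Hs N F (x0 - 1) y, Vs N F x0 (y + 1)] @ ?S"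
  proof -
    have "[x0..int N - y] = x0 # [x0 + 1..int N - y]" using x0 by (simp add: upto_rec1)
    then show ?thesis by (simp add: fr_def)
  qed
  show ?thesis
    unfolding e1 e2 using Phi_step[OF cons, of ?P ?S] sum_step[OF cons, of ?P ?S] lc by simp
qed

lemma fr_row:
  assumes TF: "oriented_TFPL N F" and y: "0 \<le> y" "y < int N"
  shows "Phi (fr N F y (int N - y + 1)) = Phi (fr N F y (- (int N - y))) + (\<Sum>x\<in>{- (int N - y)..int N - y}. loc N F x y) \<and>
         sum_list (fr N F y (int N - y + 1)) = sum_list (fr N F y (- (int N - y)))"
proof -
  let ?s = "- (int N - y)"
  have main: "\<forall>x0. ?s \<le> x0 \<longrightarrow> x0 \<le> int N - y + 1 \<longrightarrow>
      Phi (fr N F y x0) = Phi (fr N F y ?s) + (\<Sum>x\<in>{?s..<x0}. loc N F x y) \<and>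
      sum_list (fr N F y x0) = sum_list (fr N F y ?s)"
  proof (intro allI impI)
    fix x0 assume "?s \<le> x0" "x0 \<le> int N - y + 1"
    then show "Phi (fr N F y x0) = Phi (fr N F y ?s) + (\<Sum>x\<in>{?s..<x0}. loc N F x y) \<and>
      sum_list (fr N F y x0) = sum_list (fr N F y ?s)"
    proof (induction x0 rule: int_ge_induct)
      case base then show ?case by simp
    next
      case (step i)
      have st: "Phi (fr N F y (i + 1)) = Phi (fr N F y i) + loc N F i y \<and>
         sum_list (fr N F y (i + 1)) = sum_list (fr N F y i)"
        using fr_step[OF TF y, of i] step.hyps step.prems by simp
      have "{?s..<i + 1} = insert i {?s..<i}" using step.hyps by auto
      then have "(\<Sum>x\<in>{?s..<i + 1}. loc N F x y) = loc N F i y + (\<Sum>x\<in>{?s..<i}. loc N F x y)" by simp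
      then show ?case using st step.IH step.prems by simp
    qed
  qed
  have se: "{?s..<int N - y + 1} = {?s..int N - y}" by auto
  have "?s \<le> int N - y + 1" using y by simp
  from main[rule_format, OF this order.refl] show ?thesis unfolding se .
qed

lemma fr_trans:
  assumes y: "1 \<le> y" "y < int N"
  shows "Phi (fr N F (y - 1) (- (int N - (y - 1)))) = Phi (fr N F y (int N - y + 1)) \<and>
         sum_list (fr N F (y - 1) (- (int N - (y - 1)))) = sum_list (fr N F y (int N - y + 1))"
proof -
  let ?A = "Lpart N F y"
  let ?mid = "map (\<lambda>x. Vs N F x y) [- (int N - y)..int N - y]"
  let ?T = "Hs N F (int N - y) y # Rpart N F y"
  have e_end: "fr N F y (int N - y + 1) = ?A @ ?mid @ ?T"
    by (simp add: fr_def)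
  have lp: "Lpart N F y = Lpart N F (y - 1) @ [Hs N F (- (int N - (y - 1)) - 1) (y - 1)]"
  proof -
    have "[0..y - 1] = [0..y - 1 - 1] @ [y - 1]" using y by (simp add: upto_rec2)
    then show ?thesis by (simp add: Lpart_def)
  qed
  have rp: "Rpart N F (y - 1) = ?T"
  proof -
    have "[y - 1 + 1..int N - 1] = y # [y + 1..int N - 1]" using y by (simp add: upto_rec1)
    then show ?thesis by (simp add: Rpart_def)
  qed
  have v1: "Vs N F (- (int N - y + 1)) y = 0"
  proof -
    have "isL N (- (int N - y + 1), y - 1)" using y by (simp add: isL_iff)
    moreover have "\<not> isB N (- (int N - y + 1), y)" using y by (simp add: isB_iff)
    ultimately show ?thesis by (simp add: Vs_def)
  qed
  have v2: "Vs N F (int N - y + 1) y = 0"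
  proof -
    have "isR N (int N - y + 1, y - 1)" using y by (simp add: isR_iff)
    moreover have "\<not> isB N (int N - y + 1, y)" using y by (simp add: isB_iff)
    ultimately show ?thesis by (simp add: Vs_def)
  qed
  have ud: "[- (int N - (y - 1))..int N - (y - 1)] = - (int N - y + 1) # [- (int N - y)..int N - y] @ [int N - y + 1]"
  proof -
    have "[- (int N - (y - 1))..int N - (y - 1)] = - (int N - y + 1) # [- (int N - y + 1) + 1..int N - (y - 1)]"
      using y by (simp add: upto_rec1)
    moreover have "[- (int N - y + 1) + 1..int N - (y - 1)] = [- (int N - y + 1) + 1..int N - (y - 1) - 1] @ [int N - (y - 1)]"
      using y by (simp add: upto_rec2)
    ultimately show ?thesis by simp
  qed
  have e_start: "fr N F (y - 1) (- (int N - (y - 1))) = ?A @ 0 # (?mid @ 0 # ?T)"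
    unfolding fr_def lp rp ud using v1 v2 by simp
  show ?thesis unfolding e_start e_end
    using Phi_zero[of ?A "?mid @ 0 # ?T"] Phi_zero[of "?A @ ?mid" ?T] by simp
qed

lemma finite_verts: "finite (tfpl_verts N)"
proof -
  have "tfpl_verts N \<subseteq> {- int N..int N} \<times> {0..int N}" by (auto simp: tfpl_verts_def)
  then show ?thesis by (rule finite_subset) auto
qed

lemma row_sum:
  assumes y: "0 \<le> y" "y < int N"
  shows "(\<Sum>p\<in>{p \<in> tfpl_verts N. y \<le> snd p}. f p) =
         (\<Sum>p\<in>{p \<in> tfpl_verts N. y + 1 \<le> snd p}. f p) + (\<Sum>x\<in>{- (int N - y)..int N - y}. f (x, y))"
proof -
  have se: "{p \<in> tfpl_verts N. y \<le> snd p} = {p \<in> tfpl_verts N. y + 1 \<le> snd p} \<union> (\<lambda>x. (x, y)) ` {- (int N - y)..int N - y}"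
  proof (rule set_eqI)
    fix p :: vert
    obtain a b where p: "p = (a, b)" by (cases p)
    show "p \<in> {p \<in> tfpl_verts N. y \<le> snd p} \<longleftrightarrow> p \<in> {p \<in> tfpl_verts N. y + 1 \<le> snd p} \<union> (\<lambda>x. (x, y)) ` {- (int N - y)..int N - y}"
      unfolding p using y by (cases "b = y") (auto simp: tfpl_verts_def image_iff)
  qed
  have "(\<Sum>p\<in>{p \<in> tfpl_verts N. y \<le> snd p}. f p) =
      (\<Sum>p\<in>{p \<in> tfpl_verts N. y + 1 \<le> snd p}. f p) + (\<Sum>p\<in>(\<lambda>x. (x, y)) ` {- (int N - y)..int N - y}. f p)"
    unfolding se by (rule sum.union_disjoint) (use finite_verts[of N] in auto)
  also have "(\<Sum>p\<in>(\<lambda>x. (x, y)) ` {- (int N - y)..int N - y}. f p) = (\<Sum>x\<in>{- (int N - y)..int N - y}. f (x, y))"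
    by (rule sum.reindex_cong[where l = "\<lambda>x. (x, y)"]) (auto simp: inj_on_def)
  finally show ?thesis .
qed

lemma fr_all:
  assumes TF: "oriented_TFPL N F" and N1: "1 \<le> N"
  shows "Phi (fr N F 0 (int N + 1)) = Phi (fr N F (int N - 1) (- 1)) + (\<Sum>p\<in>tfpl_verts N. loc N F (fst p) (snd p)) \<and>
         sum_list (fr N F 0 (int N + 1)) = sum_list (fr N F (int N - 1) (- 1))"
proof -
  let ?f = "\<lambda>p. loc N F (fst p) (snd p)"
  let ?I = "fr N F (int N - 1) (- 1)"
  have main: "0 \<le> y \<longrightarrow> Phi (fr N F y (int N - y + 1)) = Phi ?I + (\<Sum>p\<in>{p \<in> tfpl_verts N. y \<le> snd p}. ?f p) \<and>
         sum_list (fr N F y (int N - y + 1)) = sum_list ?I" if "y \<le> int N - 1" for y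
    using that
  proof (induction y rule: int_le_induct)
    case base
    have e: "{p \<in> tfpl_verts N. int N - 1 + 1 \<le> snd p} = {}" by (auto simp: tfpl_verts_def)
    have r: "- (int N - (int N - 1)) = - 1" by simp
    show ?case using fr_row[OF TF, of "int N - 1"] N1 row_sum[of "int N - 1" N ?f] unfolding e r by simp
  next
    case (step i)
    show ?case
    proof
      assume i0: "0 \<le> i - 1"
      have row: "Phi (fr N F (i - 1) (int N - (i - 1) + 1)) = Phi (fr N F (i - 1) (- (int N - (i - 1)))) + (\<Sum>x\<in>{- (int N - (i - 1))..int N - (i - 1)}. ?f (x, i - 1)) \<and>
          sum_list (fr N F (i - 1) (int N - (i - 1) + 1)) = sum_list (fr N F (i - 1) (- (int N - (i - 1))))"
        using fr_row[OF TF, of "i - 1"] i0 step.hyps by simp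
      have tr: "Phi (fr N F (i - 1) (- (int N - (i - 1)))) = Phi (fr N F i (int N - i + 1)) \<and>
         sum_list (fr N F (i - 1) (- (int N - (i - 1)))) = sum_list (fr N F i (int N - i + 1))"
        using fr_trans[of i N F] i0 step.hyps by simp
      have rs: "(\<Sum>p\<in>{p \<in> tfpl_verts N. i - 1 \<le> snd p}. ?f p) =
         (\<Sum>p\<in>{p \<in> tfpl_verts N. i \<le> snd p}. ?f p) + (\<Sum>x\<in>{- (int N - (i - 1))..int N - (i - 1)}. ?f (x, i - 1))"
        using row_sum[of "i - 1" N ?f] i0 step.hyps by simp
      show "Phi (fr N F (i - 1) (int N - (i - 1) + 1)) = Phi ?I + (\<Sum>p\<in>{p \<in> tfpl_verts N. i - 1 \<le> snd p}. ?f p) \<and>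
         sum_list (fr N F (i - 1) (int N - (i - 1) + 1)) = sum_list ?I"
        using row tr rs step.IH i0 by simp
    qed
  qed
  have all: "{p \<in> tfpl_verts N. 0 \<le> snd p} = tfpl_verts N" by (auto simp: tfpl_verts_def)
  show ?thesis using main[of 0] N1 unfolding all by simp
qed


lemma HB:
  assumes "has_boundary N F u v w"
  shows "length u = N" "length v = N" "length w = N"
    "\<And>i. i \<in> {1..N} \<Longrightarrow> (u ! (i - 1) \<longleftrightarrow> deg F (Lv N i) = 1)"
    "\<And>i. i \<in> {1..N} \<Longrightarrow> (\<not> v ! (i - 1) \<longleftrightarrow> deg F (Rv N i) = 1)"
    "\<And>i. i \<in> {1..N} \<Longrightarrow> (w ! (i - 1) \<longrightarrow> indeg F (Bv N i) = 1)"
    "\<And>i. i \<in> {1..N} \<Longrightarrow> (\<not> w ! (i - 1) \<longrightarrow> outdeg F (Bv N i) = 1)"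
  using assms unfolding has_boundary_def by blast+

lemma length_Blist[simp]: "length (Blist w) = 2 * length w"
  by (induction w) (auto simp: Blist_def)

lemma nth_Blist: "k < 2 * length w \<Longrightarrow> Blist w ! k = (if even k then Bf (w ! (k div 2)) else od4)"
proof (induction w arbitrary: k)
  case Nil then show ?case by simp
next
  case (Cons b w)
  show ?case
  proof (cases k)
    case 0 then show ?thesis by (simp add: Blist_Cons)
  next
    case (Suc k1)
    show ?thesis
    proof (cases k1)
      case 0 then show ?thesis using Suc by (simp add: Blist_Cons)
    next
      case (Suc k2)
      have "k2 < 2 * length w" using Cons.prems \<open>k = Suc k1\<close> Suc by simp
      then show ?thesis using Cons.IH[of k2] \<open>k = Suc k1\<close> Suc by (simp add: Blist_Cons)
    qed
  qed
qed

lemma init_eq: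
  assumes TF: "oriented_TFPL N F" and HBd: "has_boundary N F u v w" and N1: "1 \<le> N"
  shows "fr N F (int N - 1) (- 1) = map Lf u @ [0, od4, 0]"
proof -
  have l1: "Lpart N F (int N - 1) @ [Hs N F (- 1 - 1) (int N - 1)] = map (\<lambda>j. Hs N F (- (int N - j) - 1) j) [0..int N - 1]"
  proof -
    have "[0..int N - 1] = [0..int N - 1 - 1] @ [int N - 1]" using N1 by (simp add: upto_rec2)
    then show ?thesis by (simp add: Lpart_def)
  qed
  have l2: "map (\<lambda>j. Hs N F (- (int N - j) - 1) j) [0..int N - 1] = map Lf u"
  proof (rule nth_equalityI)
    show "length (map (\<lambda>j. Hs N F (- (int N - j) - 1) j) [0..int N - 1]) = length (map Lf u)"
      using HB(1)[OF HBd] by simp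
  next
    fix k assume "k < length (map (\<lambda>j. Hs N F (- (int N - j) - 1) j) [0..int N - 1])"
    then have k: "k < N" by simp
    have nth: "[0..int N - 1] ! k = int k" using k by simp
    have isl: "isL N (- (int N - int k) - 1 + 1, int k)" using k by (simp add: isL_iff)
    have lv: "Lv N (k + 1) = (- (int N - int k), int k)" by (simp add: Lv_def)
    have "u ! k \<longleftrightarrow> deg F (Lv N (k + 1)) = 1" using HB(4)[OF HBd, of "k + 1"] k by simp
    then have "Hs N F (- (int N - int k) - 1) (int k) = Lf (u ! k)"
      using isl lv by (simp add: Hs_def)
    then show "map (\<lambda>j. Hs N F (- (int N - j) - 1) j) [0..int N - 1] ! k = map Lf u ! k"
      using k nth HB(1)[OF HBd] by simp
  qed
  have v1: "Vs N F (- 1) (int N - 1 + 1) = 0"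
  proof -
    have "isL N (- 1, int N - 1 + 1 - 1)" using N1 by (simp add: isL_iff)
    moreover have "\<not> isB N (- 1, int N - 1 + 1)" using N1 by (simp add: isB_iff)
    ultimately show ?thesis by (simp add: Vs_def)
  qed
  have v3: "Vs N F 1 (int N - 1 + 1) = 0"
  proof -
    have "isR N (1, int N - 1 + 1 - 1)" using N1 by (simp add: isR_iff)
    moreover have "\<not> isB N (1, int N - 1 + 1)" using N1 by (simp add: isB_iff)
    ultimately show ?thesis by (simp add: Vs_def)
  qed
  have v2: "Vs N F 0 (int N - 1 + 1) = od4"
  proof -
    have "\<not> isB N (0, int N)" "\<not> isL N (0, int N - 1)" "\<not> isR N (0, int N - 1)"
      using N1 by (auto simp: isB_iff isL_iff isR_iff)
    moreover have nv: "(0, int N) \<notin> tfpl_verts N" by (simp add: verts_iff)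
    moreover have "sg N (0, int N) = 1" by (simp add: sg_def odd_vert_def)
    ultimately show ?thesis using nonvert[OF TF nv] by (simp add: Vs_def ind_def nei_def od4_def)
  qed
  have ups: "[- 1..int N - (int N - 1)] = [- 1, 0, 1]" by (simp add: upto_rec1)
  have rp: "Rpart N F (int N - 1) = []" by (simp add: Rpart_def)
  show ?thesis
    unfolding fr_def ups rp using l1 l2 v1 v2 v3 by simp
qed

lemma Vs_bottom:
  assumes TF: "oriented_TFPL N F" and HBd: "has_boundary N F u v w"
    and x: "- int N \<le> x" "x \<le> int N"
  shows "Vs N F x 0 = (if odd (x + int N) then Bf (w ! nat ((x + int N - 1) div 2)) else od4)"
proof (cases "odd (x + int N)")
  case True
  have isb: "isB N (x, 0)" using True x by (simp add: isB_iff)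
  obtain k where k: "x + int N = 2 * k + 1" using True by (meson oddE)
  have k0: "0 \<le> k" "k < int N" using k x True by auto
  let ?i = "nat k + 1"
  have i: "?i \<in> {1..N}" using k0 by auto
  have bv: "Bv N ?i = (x, 0)" using k k0 by (simp add: Bv_def)
  have d1: "deg F (x, 0) = 1" using TF_B[OF TF] i bv by metis
  have idx: "nat ((x + int N - 1) div 2) = ?i - 1" using k k0 by simp
  have "indeg F (x, 0) = 1 \<longleftrightarrow> w ! (?i - 1)"
  proof
    assume "indeg F (x, 0) = 1"
    show "w ! (?i - 1)"
    proof (rule ccontr)
      assume "\<not> w ! (?i - 1)"
      then have "outdeg F (x, 0) = 1" using HB(7)[OF HBd i] bv by simp
      then show False using d1 \<open>indeg F (x, 0) = 1\<close> by (simp add: deg_def)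
    qed
  next
    assume "w ! (?i - 1)"
    then show "indeg F (x, 0) = 1" using HB(6)[OF HBd i] bv by simp
  qed
  then show ?thesis using True isb idx by (simp add: Vs_def Bf_def)
next
  case False
  have "\<not> isB N (x, 0)" "\<not> isL N (x, 0 - 1)" "\<not> isR N (x, 0 - 1)"
    using False by (auto simp: isB_iff isL_iff isR_iff)
  moreover have nv: "(x, 0 - 1) \<notin> tfpl_verts N" by (simp add: verts_iff)
  moreover have "sg N (x, 0) = 1" using False by (simp add: sg_def odd_vert_def)
  ultimately show ?thesis using nonvert[OF TF nv] False by (simp add: Vs_def ind_def nei_def od4_def)
qed

lemma final_eq:
  assumes TF: "oriented_TFPL N F" and HBd: "has_boundary N F u v w" and N1: "1 \<le> N"
  shows "fr N F 0 (int N + 1) = od4 # Blist w @ map Rf (rev v)"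
proof -
  have b: "map (\<lambda>x. Vs N F x 0) [- int N..int N] = od4 # Blist w"
  proof (rule nth_equalityI)
    show "length (map (\<lambda>x. Vs N F x 0) [- int N..int N]) = length (od4 # Blist w)"
      using HB(3)[OF HBd] by simp
  next
    fix k assume "k < length (map (\<lambda>x. Vs N F x 0) [- int N..int N])"
    then have k: "k < 2 * N + 1" by simp
    have nth: "[- int N..int N] ! k = - int N + int k" using k by simp
    have vb: "Vs N F (- int N + int k) 0 = (if odd (int k) then Bf (w ! nat ((int k - 1) div 2)) else od4)"
      using Vs_bottom[OF TF HBd, of "- int N + int k"] k by simp
    show "map (\<lambda>x. Vs N F x 0) [- int N..int N] ! k = (od4 # Blist w) ! k"
    proof (cases k)
      case 0 then show ?thesis using vb nth by simp
    next
      case (Suc k1)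
      have k1: "k1 < 2 * length w" using k Suc HB(3)[OF HBd] by simp
      have "nat ((int k - 1) div 2) = k1 div 2" using Suc by simp
      then show ?thesis using vb nth nth_Blist[OF k1] Suc k by simp
    qed
  qed
  have r: "map (\<lambda>j. Hs N F (int N - j) j) [0..int N - 1] = map Rf (rev v)"
  proof (rule nth_equalityI)
    show "length (map (\<lambda>j. Hs N F (int N - j) j) [0..int N - 1]) = length (map Rf (rev v))"
      using HB(2)[OF HBd] by simp
  next
    fix k assume "k < length (map (\<lambda>j. Hs N F (int N - j) j) [0..int N - 1])"
    then have k: "k < N" by simp
    have nth: "[0..int N - 1] ! k = int k" using k by simp
    have isr: "isR N (int N - int k, int k)" "\<not> isL N (int N - int k + 1, int k)" using k by (auto simp: isR_iff isL_iff)
    let ?i = "N - k"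
    have i: "?i \<in> {1..N}" using k by auto
    have rv: "Rv N ?i = (int N - int k, int k)" using k by (simp add: Rv_def of_nat_diff)
    have "\<not> v ! (?i - 1) \<longleftrightarrow> deg F (Rv N ?i) = 1" using HB(5)[OF HBd i] .
    moreover have "rev v ! k = v ! (?i - 1)" using k HB(2)[OF HBd] by (simp add: rev_nth)
    ultimately have eqv: "(deg F (int N - int k, int k) \<noteq> 1) = (rev v ! k)"
      using rv by auto
    have "Hs N F (int N - int k) (int k) = Rf (deg F (int N - int k, int k) \<noteq> 1)"
      using isr by (simp add: Hs_def)
    then have "Hs N F (int N - int k) (int k) = Rf (rev v ! k)" using eqv by simp
    then show "map (\<lambda>j. Hs N F (int N - j) j) [0..int N - 1] ! k = map Rf (rev v) ! k"
      using k nth HB(2)[OF HBd] by simp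
  qed
  have r2: "Hs N F (int N) 0 # Rpart N F 0 = map (\<lambda>j. Hs N F (int N - j) j) [0..int N - 1]"
  proof -
    have "[0..int N - 1] = 0 # [1..int N - 1]" using N1 by (simp add: upto_rec1)
    then show ?thesis by (simp add: Rpart_def)
  qed
  have lp: "Lpart N F 0 = []" by (simp add: Lpart_def)
  show ?thesis unfolding fr_def lp using b r r2 by simp
qed


lemma M8_od4[simp]: "M8 od4 x = 0"
  by (cases x) (simp add: od4_def)

lemma main_identity:
  assumes TF: "oriented_TFPL N F" and HBd: "has_boundary N F u v w" and N1: "1 \<le> N"
  shows "8 * (int (dinv w) - int (dinv u) - int (dinv v)) = (\<Sum>p\<in>tfpl_verts N. loc N F (fst p) (snd p))"
proof -
  let ?S = "\<Sum>p\<in>tfpl_verts N. loc N F (fst p) (snd p)"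
  have fa: "Phi (od4 # Blist w @ map Rf (rev v)) = Phi (map Lf u @ [0, od4, 0]) + ?S"
     "sum_list (od4 # Blist w @ map Rf (rev v)) = sum_list (map Lf u @ [0, od4, 0])"
    using fr_all[OF TF N1] unfolding init_eq[OF TF HBd N1] final_eq[OF TF HBd N1] by auto
  have lu: "length u = N" "length v = N" "length w = N" using HB[OF HBd] by auto
  have sR: "sum_list (map Rf (rev v)) = (- int N, int N, int N - cT v, 2 * cT v)"
    using sum_Rf[of "rev v"] lu by (simp add: rev_filter[symmetric])
  have sB: "sum_list (Blist w) = (2 * int N, 0, 2 * cT w - int N, - 2 * int N)"
    using sum_Blist[of w] lu by simp
  have sL: "sum_list (map Lf u) = (int N, int N, cT u, 2 * cT u - 2 * int N)"
    using sum_Lf[of u] lu by simp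
  have "od4 + (sum_list (Blist w) + sum_list (map Rf (rev v))) = sum_list (map Lf u) + od4"
    using fa(2) by (simp add: add.assoc)
  then have "(2 * int N, 0, 2 * cT w - int N, - 2 * int N) + (- int N, int N, int N - cT v, 2 * cT v)
      = (int N, int N, cT u, 2 * cT u - 2 * int N)"
    unfolding sR sB sL by (simp add: od4_def)
  then have cv: "cT v = cT u" and cw: "cT w = cT u" by auto
  have p1: "Phi (od4 # Blist w @ map Rf (rev v)) = Phi (Blist w) + Phi (map Rf (rev v))
      + M8 (sum_list (Blist w)) (sum_list (map Rf (rev v)))"
    by (simp add: Phi_append)
  have p2: "Phi (map Lf u @ [0, od4, 0]) = Phi (map Lf u) + M8 (sum_list (map Lf u)) od4"
    by (simp add: Phi_append M8_add_right)
  have "?S = Phi (Blist w) + Phi (map Rf (rev v)) + M8 (sum_list (Blist w)) (sum_list (map Rf (rev v)))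
      - Phi (map Lf u) - M8 (sum_list (map Lf u)) od4"
    using fa(1) p1 p2 by simp
  also have "\<dots> = 8 * (int (dinv w) - int (dinv u) - int (dinv v))"
    unfolding sR sB sL Phi_Blist Phi_Rf Phi_Lf lu cv cw
    by (simp add: od4_def algebra_simps power2_eq_square)
  finally show ?thesis by simp
qed


lemma wt_nonneg: "0 \<le> wt s oL iR iU oU iD oD"
  by (simp add: wt_def Let_def)

lemma wt_zero: "wt s oL iR iU oU iD oD = 0 \<longleftrightarrow>
   \<not> (if s = -1 then iU \<or> oU else iD \<or> oD) \<and> \<not> (iR \<and> oL)"
  by (simp add: wt_def Let_def)

lemma finite_F: "oriented_TFPL N F \<Longrightarrow> finite F"
proof -
  assume TF: "oriented_TFPL N F"
  have "F \<subseteq> tfpl_verts N \<times> tfpl_verts N" using TF_adj[OF TF] by auto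
  then show "finite F" using finite_verts[of N] by (meson finite_SigmaI finite_subset)
qed

lemma sg_odd: "sg N p = 1 \<longleftrightarrow> odd_vert N p" "sg N p = -1 \<longleftrightarrow> even_vert N p"
  by (auto simp: sg_def even_vert_def)

theorem proposition5p2:
  fixes N :: nat and F :: "(vert \<times> vert) set" and u v w :: "bool list"
  assumes "N \<ge> 1"
    and "oriented_TFPL N F"
    and "has_boundary N F u v w"
  shows "(int (dinv w) - int (dinv u) - int (dinv v) = 0) \<longleftrightarrow>
         (o_D N F = 0 \<and> e_U N F = 0 \<and>
          \<not> (\<exists>x y. ((x + 1, y), (x, y)) \<in> F \<and> ((x, y), (x - 1, y)) \<in> F))"
proof -
  note TF = assms(2) and HBd = assms(3) and N1 = assms(1)
  let ?f = "\<lambda>p. loc N F (fst p) (snd p)"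
  have locw: "loc N F x y = wt (sg N (x, y)) (((x, y), (x - 1, y)) \<in> F) (((x + 1, y), (x, y)) \<in> F)
      (((x, y + 1), (x, y)) \<in> F) (((x, y), (x, y + 1)) \<in> F) (((x, y - 1), (x, y)) \<in> F) (((x, y), (x, y - 1)) \<in> F)"
    if "(x, y) \<in> tfpl_verts N" for x y
    using vertex_lemma[OF TF that] by blast
  have nn: "\<forall>p\<in>tfpl_verts N. 0 \<le> ?f p"
  proof
    fix p assume "p \<in> tfpl_verts N"
    then show "0 \<le> ?f p" using locw[of "fst p" "snd p"] wt_nonneg by simp
  qed
  have "(int (dinv w) - int (dinv u) - int (dinv v) = 0) \<longleftrightarrow> (\<Sum>p\<in>tfpl_verts N. ?f p) = 0"
    using main_identity[OF TF HBd N1] by (metis mult_eq_0_iff zero_neq_numeral)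
  also have "\<dots> \<longleftrightarrow> (\<forall>p\<in>tfpl_verts N. ?f p = 0)"
    using sum_nonneg_eq_0_iff[OF finite_verts[of N], of ?f] nn by blast
  also have "\<dots> \<longleftrightarrow> (o_D N F = 0 \<and> e_U N F = 0 \<and>
          \<not> (\<exists>x y. ((x + 1, y), (x, y)) \<in> F \<and> ((x, y), (x - 1, y)) \<in> F))"
  proof
    assume Z: "\<forall>p\<in>tfpl_verts N. ?f p = 0"
    have Z': "\<not> (if sg N (x, y) = -1 then ((x, y + 1), (x, y)) \<in> F \<or> ((x, y), (x, y + 1)) \<in> F
                else ((x, y - 1), (x, y)) \<in> F \<or> ((x, y), (x, y - 1)) \<in> F) \<and>
              \<not> (((x + 1, y), (x, y)) \<in> F \<and> ((x, y), (x - 1, y)) \<in> F)"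
      if "(x, y) \<in> tfpl_verts N" for x y
      using Z that locw[OF that] wt_zero by fastforce
    have A: "o_D N F = 0"
    proof -
      have E: "{(a, b) \<in> F. odd_vert N a \<and> even_vert N b \<and> snd b = snd a - 1} = {}"
      proof (rule ccontr)
        assume "{(a, b) \<in> F. odd_vert N a \<and> even_vert N b \<and> snd b = snd a - 1} \<noteq> {}"
        then obtain x y b where ab: "((x, y), b) \<in> F" "odd_vert N (x, y)" "snd b = y - 1" by auto
        have "\<bar>x - fst b\<bar> + \<bar>y - snd b\<bar> = 1" "(x, y) \<in> tfpl_verts N" using TF_adj[OF TF ab(1)] by auto
        then have "b = (x, y - 1)" using ab(3) by (cases b) auto
        then show False using Z'[OF \<open>(x, y) \<in> tfpl_verts N\<close>] ab sg_odd(1)[of N "(x, y)"] by auto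
      qed
      show ?thesis unfolding o_D_def E by (rule card.empty)
    qed
    have B: "e_U N F = 0"
    proof -
      have E: "{(a, b) \<in> F. even_vert N a \<and> odd_vert N b \<and> snd b = snd a + 1} = {}"
      proof (rule ccontr)
        assume "{(a, b) \<in> F. even_vert N a \<and> odd_vert N b \<and> snd b = snd a + 1} \<noteq> {}"
        then obtain x y b where ab: "((x, y), b) \<in> F" "even_vert N (x, y)" "snd b = y + 1" by auto
        have "\<bar>x - fst b\<bar> + \<bar>y - snd b\<bar> = 1" "(x, y) \<in> tfpl_verts N" using TF_adj[OF TF ab(1)] by auto
        then have "b = (x, y + 1)" using ab(3) by (cases b) auto
        then show False using Z'[OF \<open>(x, y) \<in> tfpl_verts N\<close>] ab sg_odd(2)[of N "(x, y)"] by auto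
      qed
      show ?thesis unfolding e_U_def E by (rule card.empty)
    qed
    have C: "\<not> (\<exists>x y. ((x + 1, y), (x, y)) \<in> F \<and> ((x, y), (x - 1, y)) \<in> F)"
    proof
      assume "\<exists>x y. ((x + 1, y), (x, y)) \<in> F \<and> ((x, y), (x - 1, y)) \<in> F"
      then obtain x y where h: "((x + 1, y), (x, y)) \<in> F" "((x, y), (x - 1, y)) \<in> F" by blast
      have "(x, y) \<in> tfpl_verts N" using TF_adj[OF TF h(2)] by auto
      then show False using Z' h by blast
    qed
    show "o_D N F = 0 \<and> e_U N F = 0 \<and> \<not> (\<exists>x y. ((x + 1, y), (x, y)) \<in> F \<and> ((x, y), (x - 1, y)) \<in> F)"
      using A B C by blast
  next
    assume R: "o_D N F = 0 \<and> e_U N F = 0 \<and> \<not> (\<exists>x y. ((x + 1, y), (x, y)) \<in> F \<and> ((x, y), (x - 1, y)) \<in> F)"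
    have finF: "finite F" by (rule finite_F[OF TF])
    have noD: "\<not> (a, b) \<in> F \<or> \<not> odd_vert N a \<or> \<not> even_vert N b \<or> snd b \<noteq> snd a - 1" for a b
    proof -
      have "finite {(a, b) \<in> F. odd_vert N a \<and> even_vert N b \<and> snd b = snd a - 1}"
        by (rule finite_subset[OF _ finF]) auto
      then have "{(a, b) \<in> F. odd_vert N a \<and> even_vert N b \<and> snd b = snd a - 1} = {}"
        using R by (simp add: o_D_def)
      then have "(a, b) \<notin> {(a, b) \<in> F. odd_vert N a \<and> even_vert N b \<and> snd b = snd a - 1}" by blast
      then show ?thesis by simp
    qed
    have noU: "\<not> (a, b) \<in> F \<or> \<not> even_vert N a \<or> \<not> odd_vert N b \<or> snd b \<noteq> snd a + 1" for a b
    proof -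
      have "finite {(a, b) \<in> F. even_vert N a \<and> odd_vert N b \<and> snd b = snd a + 1}"
        by (rule finite_subset[OF _ finF]) auto
      then have "{(a, b) \<in> F. even_vert N a \<and> odd_vert N b \<and> snd b = snd a + 1} = {}"
        using R by (simp add: e_U_def)
      then have "(a, b) \<notin> {(a, b) \<in> F. even_vert N a \<and> odd_vert N b \<and> snd b = snd a + 1}" by blast
      then show ?thesis by simp
    qed
    show "\<forall>p\<in>tfpl_verts N. ?f p = 0"
    proof
      fix p assume p: "p \<in> tfpl_verts N"
      obtain x y where xy: "p = (x, y)" by (cases p)
      have pv: "(x, y) \<in> tfpl_verts N" using p xy by simp
      have su: "sg N (x, y + 1) = - sg N (x, y)" by (rule sg_up)
      have sd: "sg N (x, y - 1) = - sg N (x, y)" using sg_up[of N x "y - 1"] by simp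
      have c1: "\<not> (((x, y + 1), (x, y)) \<in> F \<or> ((x, y), (x, y + 1)) \<in> F)" if "sg N (x, y) = -1"
        using noD[of "(x, y + 1)" "(x, y)"] noU[of "(x, y)" "(x, y + 1)"] that su sg_odd[of N "(x, y)"] sg_odd[of N "(x, y + 1)"]
        by auto
      have c2: "\<not> (((x, y - 1), (x, y)) \<in> F \<or> ((x, y), (x, y - 1)) \<in> F)" if "sg N (x, y) \<noteq> -1"
      proof -
        have s1: "sg N (x, y) = 1" using that sg_cases[of N "(x, y)"] by auto
        show ?thesis
          using noU[of "(x, y - 1)" "(x, y)"] noD[of "(x, y)" "(x, y - 1)"] s1 sd sg_odd[of N "(x, y)"] sg_odd[of N "(x, y - 1)"]
          by auto
      qed
      have c3: "\<not> (((x + 1, y), (x, y)) \<in> F \<and> ((x, y), (x - 1, y)) \<in> F)" using R by blast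
      show "?f p = 0" unfolding xy using locw[OF pv] wt_zero c1 c2 c3 by simp
    qed
  qed
  finally show ?thesis .
qed

end
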